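(* Let $\alpha$ be a unit-speed curve in $\mathbb{R}^3$ with arc length $s$, nonzero curvature $\kappa$ and torsion $\tau$. Let $\alpha_T$ be its tangent indicatrix, with arc length $s_T=\int\kappa\,ds$, and let $\beta$ be an evolute-direction curve of $\alpha_T$ (an $X$-direction curve of $\alpha_T$ with $N_\beta=T_T$). Then there is a function $\psi(s)$ with $$\frac{d\psi}{ds}=\frac{\kappa^3}{(\kappa^2+\tau^2)^{3/2}}\Big(\frac{\tau}{\kappa}\Big)'\sqrt{1+\Big(\frac{\tau}{\kappa}\Big)^2}$$ such that, at corresponding parameter values, $$\frac{\tau_\beta}{\kappa_\beta}=-\cot\psi.$$ Moreover, $$\frac{\kappa_\beta^2}{(\kappa_\beta^2+\tau_\beta^2)^{3/2}}\,\frac{d}{ds_T}\Big(\frac{\tau_\beta}{\kappa_\beta}\Big)=\frac{\kappa^2}{(\kappa^2+\tau^2)^{3/2}}\Big(\frac{\tau}{\kappa}\Big)'.$$ Here $'$ denotes $d/ds$.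
   Context: Let $\alpha:I\subset\mathbb{R}\to\mathbb{R}^3$ be a unit-speed curve with arc length $s$, curvature $\kappa>0$, torsion $\tau$ and Frenet frame $\{T,N,B\}$. Put $f=\tau/\kappa$ and $\sigma=\frac{\kappa^2}{(\kappa^2+\tau^2)^{3/2}}(\tau/\kappa)'$, with $'=d/ds$. The tangent indicatrix of $\alpha$ is the curve $\alpha_T=T$ on the unit sphere. Its arc length is $s_T=\int\kappa\,ds$, so parameters $s$ and $s_T(s)$ correspond. Its Frenet apparatus is $\{T_T,N_T,B_T,\kappa_T,\tau_T\}$, with $\frac{dT_T}{ds_T}=\kappa_TN_T$, $\frac{dN_T}{ds_T}=-\kappa_TT_T+\tau_TB_T$ and $\frac{dB_T}{ds_T}=-\tau_TN_T$. It is known that $T_T=N$, $\kappa_T=\sqrt{1+f^2}$ and $\tau_T=\sigma\sqrt{1+f^2}$. Let $x,y,z$ be real functions of $s_T$ with $x^2+y^2+z^2=1$, and set $X=xT_T+yN_T+zB_T$. An integral curve $\beta$ of $X$, meaning $d\beta/ds_T=X$, is an $X$-direction curve of $\alpha_T$. It has unit speed with arc length $s_T$. It is regarded as a Frenet curve with frame $\{T_\beta=X,N_\beta,B_\beta\}$, curvature $\kappa_\beta>0$ and torsion $\tau_\beta$. $\beta$ is an evolute-direction curve of $\alpha_T$ if $N_\beta=T_T$. *)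

theory Defs
  imports "HOL-Analysis.Analysis" "HOL-Analysis.Cross3"
begin

definition frenet_curve ::
  "real set \<Rightarrow> (real \<Rightarrow> real^3) \<Rightarrow> (real \<Rightarrow> real^3) \<Rightarrow> (real \<Rightarrow> real^3) \<Rightarrow>
   (real \<Rightarrow> real^3) \<Rightarrow> (real \<Rightarrow> real) \<Rightarrow> (real \<Rightarrow> real) \<Rightarrow> bool" where
  "frenet_curve S c Tt Nn Bb k t \<longleftrightarrow>
    (\<forall>u\<in>S.
       (c has_vector_derivative Tt u) (at u) \<and>
       (Tt has_vector_derivative (k u *\<^sub>R Nn u)) (at u) \<and>
       (Nn has_vector_derivative (- (k u *\<^sub>R Tt u) + t u *\<^sub>R Bb u)) (at u) \<and>
       (Bb has_vector_derivative (- (t u *\<^sub>R Nn u))) (at u) \<and>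
       norm (Tt u) = 1 \<and> norm (Nn u) = 1 \<and> Tt u \<bullet> Nn u = 0 \<and>
       Bb u = cross3 (Tt u) (Nn u) \<and> k u > 0)"

end

theory Submission
  imports Defs
begin

lemma triple_cyc: "(cross3 (a::real^3) b) \<bullet> c = a \<bullet> (cross3 b c)"
  by (simp add: cross3_simps)

lemma cross_cross_right: "cross3 (a::real^3) (cross3 b c) = (a \<bullet> c) *\<^sub>R b - (a \<bullet> b) *\<^sub>R c"
  unfolding vec_eq_iff forall_3 by (simp add: cross3_def inner_vec_def sum_3 algebra_simps)

lemma frame_alg:
  fixes TT NT BT Tb Bb :: "real^3"
  assumes n1: "norm TT = 1" and n2: "norm NT = 1" and o12: "TT \<bullet> NT = 0" and bt: "BT = cross3 TT NT"
    and tb: "Tb = x *\<^sub>R TT + y *\<^sub>R NT + z *\<^sub>R BT" and xyz: "x^2+y^2+z^2=1"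
    and tbtt: "Tb \<bullet> TT = 0"
    and bb: "Bb = cross3 Tb TT"
    and kk: "kb + kT * (Tb \<bullet> NT) = 0"
    and nn: "-(kb *\<^sub>R Tb) + tau *\<^sub>R Bb = kT *\<^sub>R NT"
    and kb: "kb > 0" and kT: "kT > 0"
  shows "x = 0 \<and> Tb \<bullet> NT = y \<and> Tb \<bullet> BT = z \<and> y^2+z^2=1 \<and> kb = -kT*y \<and> tau = kT*z \<and> y<0"
proof -
  have a1: "TT \<bullet> TT = 1" using n1 by (simp add: norm_eq_1)
  have a2: "NT \<bullet> NT = 1" using n2 by (simp add: norm_eq_1)
  have a3: "BT \<bullet> TT = 0" "BT \<bullet> NT = 0" using bt by (simp_all add: dot_cross_self)
  have "(norm BT)^2 = 1" using norm_cross_dot[of TT NT] bt n1 n2 o12 by simp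
  hence a4: "BT \<bullet> BT = 1" by (simp add: power2_norm_eq_inner)
  have o21: "NT \<bullet> TT = 0" using o12 by (simp add: inner_commute)
  have a5: "TT \<bullet> BT = 0" "NT \<bullet> BT = 0" using a3 by (simp_all add: inner_commute)
  have cx: "Tb \<bullet> TT = x" unfolding tb by (simp add: inner_add_left a1 o21 a3)
  have cy: "Tb \<bullet> NT = y" unfolding tb by (simp add: inner_add_left a2 o12 a3)
  have cz: "Tb \<bullet> BT = z" unfolding tb by (simp add: inner_add_left a4 a5)
  have x0: "x = 0" using cx tbtt by simp
  have tbt: "cross3 TT BT = - NT" unfolding bt cross_cross_right using a1 o12 by simp
  have bbbt: "Bb \<bullet> BT = - y" unfolding bb triple_cyc tbt using cy by simp
  have "(-(kb *\<^sub>R Tb) + tau *\<^sub>R Bb) \<bullet> BT = (kT *\<^sub>R NT) \<bullet> BT" using nn by simp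
  hence e: "- kb * z - tau * y = 0" using bbbt cz a5 by (simp add: inner_add_left inner_diff_left)
  have ky: "kb = -kT*y" using kk cy by simp
  have "kT * y < 0" using ky kb by simp
  hence yneg: "y < 0" using kT by (simp add: mult_less_0_iff)
  have "tau * y = - kb * z" using e by linarith
  also have "\<dots> = (kT*z) * y" using ky by simp
  finally have "tau * y = (kT*z) * y" .
  hence "tau = kT*z" using yneg by (metis less_irrefl mult_right_cancel)
  thus ?thesis using x0 cy cz xyz ky yneg by simp
qed

theorem corollary4p6:
  fixes I :: "real set"
    and \<alpha> T N B :: "real \<Rightarrow> real^3" and \<kappa> \<tau> :: "real \<Rightarrow> real"
    and sT :: "real \<Rightarrow> real"
    and \<alpha>T TT NT BT :: "real \<Rightarrow> real^3" and \<kappa>T \<tau>T :: "real \<Rightarrow> real"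
    and x y z :: "real \<Rightarrow> real"
    and \<beta> T\<beta> N\<beta> B\<beta> :: "real \<Rightarrow> real^3" and \<kappa>\<beta> \<tau>\<beta> :: "real \<Rightarrow> real"
  defines "f \<equiv> (\<lambda>s. \<tau> s / \<kappa> s)"
  defines "\<sigma> \<equiv> (\<lambda>s. \<kappa> s ^ 2 / (\<kappa> s ^ 2 + \<tau> s ^ 2) powr (3/2) * deriv f s)"
  assumes I: "open I" "is_interval I" "I \<noteq> {}"
    \<comment> \<open>the curve alpha, unit speed, with Frenet apparatus\<close>
    and alpha: "frenet_curve I \<alpha> T N B \<kappa> \<tau>"
    and f_diff: "\<And>s. s \<in> I \<Longrightarrow> f differentiable (at s)"
    \<comment> \<open>arc length of the tangent indicatrix\<close>
    and sT: "\<And>s. s \<in> I \<Longrightarrow> (sT has_real_derivative \<kappa> s) (at s)"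
    \<comment> \<open>the tangent indicatrix alpha_T = T, reparametrised by its arc length sT,
        with its Frenet apparatus\<close>
    and alphaT: "\<And>s. s \<in> I \<Longrightarrow> \<alpha>T (sT s) = T s"
    and alphaT_frenet: "frenet_curve (sT ` I) \<alpha>T TT NT BT \<kappa>T \<tau>T"
    \<comment> \<open>known facts about the Frenet apparatus of alpha_T\<close>
    and TT: "\<And>s. s \<in> I \<Longrightarrow> TT (sT s) = N s"
    and kT: "\<And>s. s \<in> I \<Longrightarrow> \<kappa>T (sT s) = sqrt (1 + (f s)^2)"
    and tT: "\<And>s. s \<in> I \<Longrightarrow> \<tau>T (sT s) = \<sigma> s * sqrt (1 + (f s)^2)"
    \<comment> \<open>beta is an X-direction curve of alpha_T, X = x TT + y NT + z BT\<close>
    and xyz: "\<And>u. u \<in> sT ` I \<Longrightarrow> (x u)^2 + (y u)^2 + (z u)^2 = 1"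
    and beta_X: "\<And>u. u \<in> sT ` I \<Longrightarrow>
        (\<beta> has_vector_derivative (x u *\<^sub>R TT u + y u *\<^sub>R NT u + z u *\<^sub>R BT u)) (at u)"
    and beta: "frenet_curve (sT ` I) \<beta> T\<beta> N\<beta> B\<beta> \<kappa>\<beta> \<tau>\<beta>"
    \<comment> \<open>evolute-direction curve\<close>
    and evolute: "\<And>u. u \<in> sT ` I \<Longrightarrow> N\<beta> u = TT u"
  shows "(\<exists>\<psi>. \<forall>s\<in>I.
            (\<psi> has_real_derivative
               (\<kappa> s ^ 3 / (\<kappa> s ^ 2 + \<tau> s ^ 2) powr (3/2) * deriv f s * sqrt (1 + (f s)^2)))
               (at s) \<and>
            \<tau>\<beta> (sT s) / \<kappa>\<beta> (sT s) = - cot (\<psi> s))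
       \<and> (\<forall>s\<in>I. \<exists>d.
            ((\<lambda>u. \<tau>\<beta> u / \<kappa>\<beta> u) has_real_derivative d) (at (sT s)) \<and>
            \<kappa>\<beta> (sT s) ^ 2 / (\<kappa>\<beta> (sT s) ^ 2 + \<tau>\<beta> (sT s) ^ 2) powr (3/2) * d
              = \<kappa> s ^ 2 / (\<kappa> s ^ 2 + \<tau> s ^ 2) powr (3/2) * deriv f s)"
  proof -
  let ?U = "sT ` I"
  define Y where "Y = (\<lambda>v. T\<beta> v \<bullet> NT v)"
  define Z where "Z = (\<lambda>v. T\<beta> v \<bullet> BT v)"
  have sTcont: "continuous_on I sT"
    using sT by (meson DERIV_isCont continuous_at_imp_continuous_on)
  have Uint: "is_interval ?U"
    using connected_continuous_image[OF sTcont] I(2) by (simp add: is_interval_connected_1)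
  have kpos: "\<And>s. s \<in> I \<Longrightarrow> \<kappa> s > 0" using alpha unfolding frenet_curve_def by blast
  have Uopen: "open ?U"
  proof (rule openI)
    fix u assume "u \<in> ?U"
    then obtain s where s: "s \<in> I" "u = sT s" by blast
    obtain e where e: "e > 0" "ball s e \<subseteq> I" using I(1) s(1) open_contains_ball by blast
    obtain d1 where d1: "d1 > 0" "\<forall>h>0. h < d1 \<longrightarrow> sT s < sT (s + h)"
      using DERIV_pos_inc_right[OF sT[OF s(1)] kpos[OF s(1)]] by blast
    obtain d2 where d2: "d2 > 0" "\<forall>h>0. h < d2 \<longrightarrow> sT (s - h) < sT s"
      using DERIV_pos_inc_left[OF sT[OF s(1)] kpos[OF s(1)]] by blast
    define h where "h = min e (min d1 d2) / 2"
    have h: "h > 0" "h < d1" "h < d2" "h < e" using e d1 d2 by (auto simp: h_def)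
    have "s + h \<in> I" "s - h \<in> I" using e h by (auto simp: dist_real_def subset_eq)
    hence ab: "sT (s + h) \<in> ?U" "sT (s - h) \<in> ?U" by auto
    have lt: "sT (s - h) < u" "u < sT (s + h)" using d1 d2 h s by auto
    define r where "r = min (u - sT (s - h)) (sT (s + h) - u)"
    have "r > 0" using lt by (simp add: r_def)
    moreover have "ball u r \<subseteq> ?U"
    proof
      fix v assume "v \<in> ball u r"
      hence "sT (s - h) \<le> v" "v \<le> sT (s + h)" by (auto simp: r_def dist_real_def)
      thus "v \<in> ?U" using Uint ab unfolding is_interval_1 by blast
    qed
    ultimately show "\<exists>e>0. ball u e \<subseteq> ?U" by blast
  qed
  have key: "(Y has_real_derivative \<tau>T u * Z u) (at u) \<and> (Z has_real_derivative - \<tau>T u * Y u) (at u)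
      \<and> (Y u)^2 + (Z u)^2 = 1 \<and> Y u < 0 \<and> \<kappa>\<beta> u = - \<kappa>T u * Y u \<and> \<tau>\<beta> u = \<kappa>T u * Z u \<and> \<kappa>T u > 0"
    if u: "u \<in> ?U" for u
  proof -
    from alphaT_frenet u have A:
       "(TT has_vector_derivative (\<kappa>T u *\<^sub>R NT u)) (at u)"
       "(NT has_vector_derivative (- (\<kappa>T u *\<^sub>R TT u) + \<tau>T u *\<^sub>R BT u)) (at u)"
       "(BT has_vector_derivative (- (\<tau>T u *\<^sub>R NT u))) (at u)"
       "norm (TT u) = 1" "norm (NT u) = 1" "TT u \<bullet> NT u = 0"
       "BT u = cross3 (TT u) (NT u)" "\<kappa>T u > 0"
      unfolding frenet_curve_def by blast+
    from beta u have B: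
       "(\<beta> has_vector_derivative T\<beta> u) (at u)"
       "(T\<beta> has_vector_derivative (\<kappa>\<beta> u *\<^sub>R N\<beta> u)) (at u)"
       "(N\<beta> has_vector_derivative (- (\<kappa>\<beta> u *\<^sub>R T\<beta> u) + \<tau>\<beta> u *\<^sub>R B\<beta> u)) (at u)"
       "T\<beta> u \<bullet> N\<beta> u = 0"
       "B\<beta> u = cross3 (T\<beta> u) (N\<beta> u)" "\<kappa>\<beta> u > 0"
      unfolding frenet_curve_def by blast+
    have Tb: "T\<beta> u = x u *\<^sub>R TT u + y u *\<^sub>R NT u + z u *\<^sub>R BT u"
      using vector_derivative_unique_at[OF B(1) beta_X[OF u]] .
    have Nb: "N\<beta> u = TT u" using evolute[OF u] .
    have tbtt: "T\<beta> u \<bullet> TT u = 0" using B(4) Nb by simp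
    have TT1: "TT u \<bullet> TT u = 1" using A(4) by (simp add: norm_eq_1)
    have TTBT: "TT u \<bullet> BT u = 0" "NT u \<bullet> BT u = 0" using A(7)
      by (simp_all add: dot_cross_self inner_commute)
    have g: "((\<lambda>v. T\<beta> v \<bullet> TT v) has_vector_derivative
        (T\<beta> u \<bullet> (\<kappa>T u *\<^sub>R NT u) + (\<kappa>\<beta> u *\<^sub>R N\<beta> u) \<bullet> TT u)) (at u)"
      using bounded_bilinear.has_vector_derivative[OF bounded_bilinear_inner B(2) A(1)] .
    have g0: "((\<lambda>v. T\<beta> v \<bullet> TT v) has_vector_derivative 0) (at u)"
    proof (rule has_vector_derivative_transform_within_open[OF _ Uopen u])
      show "((\<lambda>v. 0::real) has_vector_derivative 0) (at u)" by (rule has_vector_derivative_const)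
      fix v assume v: "v \<in> ?U"
      have "T\<beta> v \<bullet> N\<beta> v = 0" using beta v unfolding frenet_curve_def by blast
      thus "0 = T\<beta> v \<bullet> TT v" using evolute[OF v] by simp
    qed
    have kk: "\<kappa>\<beta> u + \<kappa>T u * (T\<beta> u \<bullet> NT u) = 0"
      using vector_derivative_unique_at[OF g g0] Nb TT1 by (simp add: algebra_simps)
    have NbTT: "(TT has_vector_derivative (- (\<kappa>\<beta> u *\<^sub>R T\<beta> u) + \<tau>\<beta> u *\<^sub>R B\<beta> u)) (at u)"
      by (rule has_vector_derivative_transform_within_open[OF B(3) Uopen u]) (use evolute in auto)
    have nn: "- (\<kappa>\<beta> u *\<^sub>R T\<beta> u) + \<tau>\<beta> u *\<^sub>R B\<beta> u = \<kappa>T u *\<^sub>R NT u"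
      using vector_derivative_unique_at[OF NbTT A(1)] .
    have xyz1: "(x u)^2 + (y u)^2 + (z u)^2 = 1" using xyz[OF u] .
    have R: "x u = 0 \<and> T\<beta> u \<bullet> NT u = y u \<and> T\<beta> u \<bullet> BT u = z u \<and> (y u)^2+(z u)^2=1 \<and>
        \<kappa>\<beta> u = -\<kappa>T u*y u \<and> \<tau>\<beta> u = \<kappa>T u*z u \<and> y u<0"
      by (rule frame_alg[OF A(4) A(5) A(6) A(7) Tb xyz1 tbtt _ kk nn B(6) A(8)])
         (simp add: B(5) Nb)
    have dY: "(Y has_vector_derivative
        (T\<beta> u \<bullet> (- (\<kappa>T u *\<^sub>R TT u) + \<tau>T u *\<^sub>R BT u) + (\<kappa>\<beta> u *\<^sub>R N\<beta> u) \<bullet> NT u)) (at u)"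
      unfolding Y_def using bounded_bilinear.has_vector_derivative[OF bounded_bilinear_inner B(2) A(2)] .
    have dZ: "(Z has_vector_derivative
        (T\<beta> u \<bullet> (- (\<tau>T u *\<^sub>R NT u)) + (\<kappa>\<beta> u *\<^sub>R N\<beta> u) \<bullet> BT u)) (at u)"
      unfolding Z_def using bounded_bilinear.has_vector_derivative[OF bounded_bilinear_inner B(2) A(3)] .
    have "T\<beta> u \<bullet> (- (\<kappa>T u *\<^sub>R TT u) + \<tau>T u *\<^sub>R BT u) + (\<kappa>\<beta> u *\<^sub>R N\<beta> u) \<bullet> NT u = \<tau>T u * Z u"
      using tbtt Nb A(6) by (simp add: Z_def inner_add_right inner_diff_right)
    moreover have "T\<beta> u \<bullet> (- (\<tau>T u *\<^sub>R NT u)) + (\<kappa>\<beta> u *\<^sub>R N\<beta> u) \<bullet> BT u = - \<tau>T u * Y u"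
      using TTBT Nb by (simp add: Y_def)
    ultimately show ?thesis using dY dZ R A(8)
      by (simp add: has_real_derivative_iff_has_vector_derivative Y_def Z_def)
  qed
  have pow32: "(k ^ 2) powr (3/2) = k ^ 3" if "k > 0" for k :: real
  proof -
    have "(k ^ 2) powr (3/2) = (k powr real 2) powr (3/2)" using that by (simp add: powr_realpow)
    also have "\<dots> = k powr real 3" by (simp add: powr_powr)
    also have "\<dots> = k ^ 3" using that by (rule powr_realpow)
    finally show ?thesis .
  qed
  show ?thesis
  proof (intro conjI)
    show "\<exists>\<psi>. \<forall>s\<in>I.
            (\<psi> has_real_derivative
               (\<kappa> s ^ 3 / (\<kappa> s ^ 2 + \<tau> s ^ 2) powr (3/2) * deriv f s * sqrt (1 + (f s)^2)))
               (at s) \<and>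
            \<tau>\<beta> (sT s) / \<kappa>\<beta> (sT s) = - cot (\<psi> s)"
    proof (intro exI[of _ "\<lambda>s. - arccos (Z (sT s))"] ballI conjI)
      fix s assume s: "s \<in> I"
      define u where "u = sT s"
      have u: "u \<in> ?U" using s by (simp add: u_def)
      note K = key[OF u]
      have "(Z u)^2 < 1" using K by (smt (verit) zero_less_power2)
      hence "\<bar>Z u\<bar> < 1" by (simp add: abs_square_less_1)
      hence Zb: "-1 < Z u" "Z u < 1" by auto
      have e1: "1 - (Z u)^2 = (Y u)^2" using K by simp
      have sq: "sqrt (1 - (Z u)^2) = - Y u" unfolding e1 real_sqrt_abs using K by simp
      have dZs: "((\<lambda>s. Z (sT s)) has_real_derivative (- \<tau>T u * Y u) * \<kappa> s) (at s)"
        using DERIV_chain2[of Z "- \<tau>T u * Y u" sT s "\<kappa> s"] K sT[OF s] by (simp add: u_def)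
      have dA: "((\<lambda>s. arccos (Z (sT s))) has_real_derivative
            inverse (- sqrt (1 - (Z u)^2)) * ((- \<tau>T u * Y u) * \<kappa> s)) (at s)"
      proof -
        have dAc: "(arccos has_real_derivative inverse (- sqrt (1 - (Z u)^2))) (at ((\<lambda>s. Z (sT s)) s))"
          using DERIV_arccos[OF Zb] by (simp add: u_def)
        show ?thesis using DERIV_chain2[OF dAc dZs] by simp
      qed
      have eq: "- (inverse (- sqrt (1 - (Z u)^2)) * ((- \<tau>T u * Y u) * \<kappa> s))
          = \<kappa> s ^ 3 / (\<kappa> s ^ 2 + \<tau> s ^ 2) powr (3/2) * deriv f s * sqrt (1 + (f s)^2)"
        using sq K tT[OF s] by (simp add: u_def \<sigma>_def field_simps power3_eq_cube power2_eq_square)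
      show "((\<lambda>s. - arccos (Z (sT s))) has_real_derivative
               (\<kappa> s ^ 3 / (\<kappa> s ^ 2 + \<tau> s ^ 2) powr (3/2) * deriv f s * sqrt (1 + (f s)^2))) (at s)"
        using DERIV_cong[OF DERIV_minus[OF dA] eq] .
      have "- cot (- arccos (Z (sT s))) = Z u / sqrt (1 - (Z u)^2)"
        using Zb by (simp add: u_def cot_def sin_arccos)
      also have "\<dots> = \<tau>\<beta> u / \<kappa>\<beta> u" using sq K by (simp add: field_simps)
      finally show "\<tau>\<beta> (sT s) / \<kappa>\<beta> (sT s) = - cot (- arccos (Z (sT s)))" by (simp add: u_def)
    qed
    show "\<forall>s\<in>I. \<exists>d.
            ((\<lambda>u. \<tau>\<beta> u / \<kappa>\<beta> u) has_real_derivative d) (at (sT s)) \<and>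
            \<kappa>\<beta> (sT s) ^ 2 / (\<kappa>\<beta> (sT s) ^ 2 + \<tau>\<beta> (sT s) ^ 2) powr (3/2) * d
              = \<kappa> s ^ 2 / (\<kappa> s ^ 2 + \<tau> s ^ 2) powr (3/2) * deriv f s"
    proof
      fix s assume s: "s \<in> I"
      define u where "u = sT s"
      have u: "u \<in> ?U" using s by (simp add: u_def)
      note K = key[OF u]
      have Yn: "Y u \<noteq> 0" using K by simp
      have dQ0: "((\<lambda>v. - (Z v / Y v)) has_real_derivative
          - ((- \<tau>T u * Y u * Y u - Z u * (\<tau>T u * Z u)) / (Y u * Y u))) (at u)"
        using DERIV_minus[OF DERIV_divide[OF conjunct1[OF conjunct2[OF K]] conjunct1[OF K] Yn]] .
      have "- ((- \<tau>T u * Y u * Y u - Z u * (\<tau>T u * Z u)) / (Y u * Y u))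
          = \<tau>T u * ((Y u)^2 + (Z u)^2) / (Y u)^2"
        using Yn by (simp add: field_simps power2_eq_square)
      also have "\<dots> = \<tau>T u / (Y u)^2" using K by simp
      finally have dQ: "((\<lambda>v. - (Z v / Y v)) has_real_derivative \<tau>T u / (Y u)^2) (at u)"
        using dQ0 by simp
      have dR: "((\<lambda>v. \<tau>\<beta> v / \<kappa>\<beta> v) has_real_derivative \<tau>T u / (Y u)^2) (at u)"
      proof (rule has_field_derivative_transform_within_open[OF dQ Uopen u])
        fix v assume v: "v \<in> ?U"
        note Kv = key[OF v]
        show "- (Z v / Y v) = \<tau>\<beta> v / \<kappa>\<beta> v" using Kv by (simp add: field_simps)
      qed
      have sumsq: "\<kappa>\<beta> u ^ 2 + \<tau>\<beta> u ^ 2 = \<kappa>T u ^ 2"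
      proof -
        have kb: "\<kappa>\<beta> u = - \<kappa>T u * Y u" and tb: "\<tau>\<beta> u = \<kappa>T u * Z u" using K by simp_all
        have "\<kappa>\<beta> u ^ 2 + \<tau>\<beta> u ^ 2 = \<kappa>T u ^ 2 * ((Y u)^2 + (Z u)^2)"
          unfolding kb tb by (simp add: algebra_simps power2_eq_square)
        thus ?thesis using K by simp
      qed
      have q: "sqrt (1 + (f s)^2) > 0" by (simp add: add_pos_nonneg)
      have "\<kappa>\<beta> u ^ 2 / (\<kappa>\<beta> u ^ 2 + \<tau>\<beta> u ^ 2) powr (3/2) * (\<tau>T u / (Y u)^2)
          = \<tau>T u / \<kappa>T u"
        unfolding sumsq pow32[OF conjunct2[OF conjunct2[OF conjunct2[OF conjunct2[OF conjunct2[OF conjunct2[OF K]]]]]]]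
        using K by (simp add: field_simps power2_eq_square power3_eq_cube)
      also have "\<dots> = \<kappa> s ^ 2 / (\<kappa> s ^ 2 + \<tau> s ^ 2) powr (3/2) * deriv f s"
        using tT[OF s] kT[OF s] q by (simp add: u_def \<sigma>_def)
      finally show "\<exists>d. ((\<lambda>u. \<tau>\<beta> u / \<kappa>\<beta> u) has_real_derivative d) (at (sT s)) \<and>
            \<kappa>\<beta> (sT s) ^ 2 / (\<kappa>\<beta> (sT s) ^ 2 + \<tau>\<beta> (sT s) ^ 2) powr (3/2) * d
              = \<kappa> s ^ 2 / (\<kappa> s ^ 2 + \<tau> s ^ 2) powr (3/2) * deriv f s"
        using dR unfolding u_def by blast
    qed
  qed
qed

end
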